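(* Let $M, K, P, N$ be positive integers with $M < K \le P$ and such that $P$ divides $N$. Let $\mathbf{a}_1^T, \ldots, \mathbf{a}_M^T \in \mathbb{R}^{1\times N}$ be arbitrary row vectors. Then there exists a matrix $\mathbf{F} \in \mathbb{R}^{P \times N}$ such that: (i) for every set $\chi \subseteq \{1,\ldots,P\}$ with $|\chi| = K$, each of $\mathbf{a}_1^T, \ldots, \mathbf{a}_M^T$ is a linear combination of the rows of $\mathbf{F}$ indexed by $\chi$; and (ii) every row of $\mathbf{F}$ has sparsity at most $s = \frac{N}{P}(P-K+M)$.
   Context: The sparsity of a vector $\mathbf{u} \in \mathbb{R}^N$ is its number of nonzero entries, $\|\mathbf{u}\|_0 = \#\{j : u_j \neq 0\}$. *)

theory Defs
  imports "HOL-Analysis.Analysis"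
begin

text \<open>Vectors in R^N are represented as functions nat => real, only entries j < N matter.
  Sparsity of a vector u of length N: number of indices j < N with u j nonzero.\<close>
definition sparsity :: "nat \<Rightarrow> (nat \<Rightarrow> real) \<Rightarrow> nat" where
  "sparsity N u = card {j. j < N \<and> u j \<noteq> 0}"

definition lin_comb_of_rows :: "nat \<Rightarrow> (nat \<Rightarrow> nat \<Rightarrow> real) \<Rightarrow> nat set \<Rightarrow> (nat \<Rightarrow> real) \<Rightarrow> bool" where
  "lin_comb_of_rows N F chi v \<longleftrightarrow> (\<exists>c :: nat \<Rightarrow> real. \<forall>j<N. v j = (\<Sum>p\<in>chi. c p * F p j))"

end

theory Submission imports Defs "HOL-Computational_Algebra.Polynomial" begin

lemma degree_prod_lin:
  fixes T :: "real set"
  assumes "finite T"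
  shows "degree (\<Prod>q\<in>T. smult (c q) [:- q, 1:]) \<le> card T"
proof -
  have "degree (\<Prod>q\<in>T. smult (c q) [:- q, 1:]) \<le> sum (degree \<circ> (\<lambda>q. smult (c q) [:- q, 1:])) T"
    by (rule degree_prod_sum_le[OF assms])
  also have "\<dots> \<le> (\<Sum>q\<in>T. 1)"
  proof (rule sum_mono)
    fix q show "(degree \<circ> (\<lambda>q. smult (c q) [:- q, 1:])) q \<le> 1"
      unfolding o_apply by (rule order_trans[OF degree_smult_le]) simp
  qed
  finally show ?thesis by simp
qed

lemma lagrange:
  fixes R :: "real poly" and S :: "real set"
  assumes S: "finite S" and deg: "degree R < card S"
  shows "poly R x = (\<Sum>s\<in>S. poly R s * (\<Prod>q\<in>S-{s}. (x - q)/(s - q)))"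
proof -
  define L where "L = (\<Sum>s\<in>S. smult (poly R s) (\<Prod>q\<in>S-{s}. smult (1/(s-q)) [:-q,1:]))"
  have polyL: "poly L y = (\<Sum>s\<in>S. poly R s * (\<Prod>q\<in>S-{s}. (y - q)/(s - q)))" for y
  proof -
    have e: "\<And>s q. 1/(s-q) * poly [:-q,1:] y = (y-q)/(s-q)" by simp
    show ?thesis unfolding L_def poly_sum poly_smult poly_prod e ..
  qed
  have "degree L \<le> card S - 1"
    unfolding L_def
  proof (rule degree_sum_le[OF S])
    fix s assume "s \<in> S"
    have "degree (smult (poly R s) (\<Prod>q\<in>S-{s}. smult (1/(s-q)) [:-q,1:])) \<le> card (S - {s})"
      by (rule order_trans[OF degree_smult_le degree_prod_lin]) (use S in simp)
    thus "degree (smult (poly R s) (\<Prod>q\<in>S-{s}. smult (1/(s-q)) [:-q,1:])) \<le> card S - 1"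
      using \<open>s \<in> S\<close> S by simp
  qed
  hence degL: "degree L < card S" using deg by linarith
  have "R = L"
  proof (rule poly_eqI_degree[OF _ deg degL])
    fix y assume y: "y \<in> S"
    have "(\<Sum>s\<in>S. poly R s * (\<Prod>q\<in>S-{s}. (y - q)/(s - q))) = poly R y * (\<Prod>q\<in>S-{y}. (y - q)/(y - q))
          + (\<Sum>s\<in>S-{y}. poly R s * (\<Prod>q\<in>S-{s}. (y - q)/(s - q)))"
      by (subst sum.remove[OF S y]) (rule refl)
    also have "(\<Sum>s\<in>S-{y}. poly R s * (\<Prod>q\<in>S-{s}. (y - q)/(s - q))) = 0"
    proof (rule sum.neutral, intro ballI)
      fix s assume "s \<in> S - {y}"
      hence "y \<in> S - {s}" using y by auto
      hence "(\<Prod>q\<in>S-{s}. (y - q)/(s - q)) = 0"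
        using S by (intro prod_zero) auto
      thus "poly R s * (\<Prod>q\<in>S-{s}. (y - q)/(s - q)) = 0" by simp
    qed
    also have "(\<Prod>q\<in>S-{y}. (y - q)/(y - q)) = 1"
      by (intro prod.neutral) auto
    finally show "poly R y = poly L y" using polyL by simp
  qed
  then have "poly R x = poly L x" by (rule arg_cong)
  thus ?thesis by (simp only: polyL)
qed

lemma degree_prod_lin2:
  assumes "finite T"
  shows "degree (\<Prod>z\<in>T. [:- (g z :: real), 1:]) \<le> card T"
proof -
  have "degree (\<Prod>z\<in>T. [:- (g z :: real), 1:]) \<le> sum (degree \<circ> (\<lambda>z. [:- (g z :: real), 1:])) T"
    by (rule degree_prod_sum_le[OF assms])
  also have "\<dots> = (\<Sum>q\<in>T. 1)" by simp
  finally show ?thesis by simp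
qed

lemma lagrange_nat:
  fixes R :: "real poly" and A :: "nat set"
  assumes A: "finite A" and deg: "degree R < card A"
  shows "poly R x = (\<Sum>p\<in>A. poly R (real p) * (\<Prod>q\<in>A-{p}. (x - real q)/(real p - real q)))"
proof -
  have inj: "inj_on real A" by (auto simp: inj_on_def)
  have c: "card (real ` A) = card A" using inj by (rule card_image)
  have "poly R x = (\<Sum>s\<in>real ` A. poly R s * (\<Prod>q\<in>real ` A-{s}. (x - q)/(s - q)))"
    by (rule lagrange) (use A deg c in auto)
  also have "\<dots> = (\<Sum>p\<in>A. poly R (real p) * (\<Prod>q\<in>real ` A-{real p}. (x - q)/(real p - q)))"
    by (subst sum.reindex[OF inj]) simp
  also have "\<dots> = (\<Sum>p\<in>A. poly R (real p) * (\<Prod>q\<in>A-{p}. (x - real q)/(real p - real q)))"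
  proof (rule sum.cong[OF refl])
    fix p assume "p \<in> A"
    have e: "real ` A - {real p} = real ` (A - {p})" by auto
    have i2: "inj_on real (A - {p})" by (auto simp: inj_on_def)
    show "poly R (real p) * (\<Prod>q\<in>real ` A-{real p}. (x - q)/(real p - q)) =
          poly R (real p) * (\<Prod>q\<in>A-{p}. (x - real q)/(real p - real q))"
      unfolding e by (subst prod.reindex[OF i2]) simp
  qed
  finally show ?thesis .
qed


theorem theorem1:
  fixes M K P N :: nat and a :: "nat \<Rightarrow> nat \<Rightarrow> real"
  assumes "0 < M" and "M < K" and "K \<le> P" and "0 < N" and "P dvd N"
  shows "\<exists>F :: nat \<Rightarrow> nat \<Rightarrow> real.
           (\<forall>chi. chi \<subseteq> {0..<P} \<and> card chi = K \<longrightarrow>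
              (\<forall>i<M. lin_comb_of_rows N F chi (a i)))
         \<and> (\<forall>p<P. real (sparsity N (F p)) \<le> real N / real P * real (P - K + M))"
proof -
  define n where "n = N div P"
  have P0: "0 < P" using assms by linarith
  have Nn: "N = P * n" using assms(5) n_def by simp
  have n0: "0 < n" using assms(4) Nn by (cases n) auto
  define d where "d = P - K + M"
  define g :: "nat \<Rightarrow> nat \<Rightarrow> nat" where "g p t = (if t \<le> p then p - t else p + P - t)" for p t
  define Z where "Z t = {p. p < P \<and> \<not> g p t < d}" for t
  define \<beta> where "\<beta> m = real P + real m" for m
  define Q where "Q t = (\<Prod>z\<in>Z t. [:- real z, 1:])" for t
  define B where "B m = (\<Prod>i\<in>{0..<M}-{m}. [:- \<beta> i, 1:])" for m
  define R where "R t m = smult (1/(poly (Q t) (\<beta> m) * poly (B m) (\<beta> m))) (Q t * B m)" for t m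
  define F where "F p j = (\<Sum>m<M. poly (R (j div n) m) (real p) * a m j)" for p j
  have ginj: "inj_on (\<lambda>p. g p t) {0..<P}" if "t < P" for t
    using that unfolding g_def inj_on_def by auto
  have ginj2: "inj_on (\<lambda>t. g p t) {0..<P}" if "p < P" for p
    using that unfolding g_def inj_on_def by auto
  have gP: "g p t < P" if "p < P" "t < P" for p t
    using that unfolding g_def by auto
  have finZ: "finite (Z t)" for t unfolding Z_def by auto
  have cardZ: "card (Z t) \<le> K - M" if "t < P" for t
  proof -
    have "card (Z t) = card ((\<lambda>p. g p t) ` Z t)"
      by (rule card_image[symmetric], rule inj_on_subset[OF ginj[OF that]]) (auto simp: Z_def)
    also have "\<dots> \<le> card {d..<P}"
      by (rule card_mono) (use gP that in \<open>auto simp: Z_def\<close>)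
    also have "\<dots> = K - M" using assms unfolding d_def by simp
    finally show ?thesis .
  qed
  have degR: "degree (R t m) < K" if "t < P" "m < M" for t m
  proof -
    have "degree (R t m) \<le> degree (Q t * B m)" unfolding R_def by (rule degree_smult_le)
    also have "\<dots> \<le> degree (Q t) + degree (B m)" by (rule degree_mult_le)
    also have "\<dots> \<le> card (Z t) + card ({0..<M}-{m})"
      unfolding Q_def B_def by (intro add_mono degree_prod_lin2) (auto simp: finZ)
    also have "\<dots> \<le> (K - M) + (M - 1)" using cardZ[OF that(1)] that(2) by simp
    finally show ?thesis using assms by linarith
  qed
  have R0: "poly (R t m) (real p) = 0" if "p \<in> Z t" for t m p
  proof -
    have "poly (Q t) (real p) = 0"
      unfolding Q_def poly_prod by (rule prod_zero) (use that finZ in auto)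
    thus ?thesis unfolding R_def by simp
  qed
  have Rb: "poly (R t m) (\<beta> i) = (if i = m then 1 else 0)" if "i < M" "m < M" for t m i
  proof (cases "i = m")
    case True
    have q: "poly (Q t) (\<beta> m) \<noteq> 0"
      unfolding Q_def poly_prod using finZ[of t]
      by (auto simp: prod_zero_iff Z_def \<beta>_def)
    have b: "poly (B m) (\<beta> m) \<noteq> 0"
      unfolding B_def poly_prod
      by (auto simp: prod_zero_iff \<beta>_def)
    show ?thesis using True q b unfolding R_def by simp
  next
    case False
    have "poly (B m) (\<beta> i) = 0"
      unfolding B_def poly_prod by (rule prod_zero) (use that False in auto)
    thus ?thesis using False unfolding R_def by simp
  qed
  show ?thesis
  proof (intro exI conjI allI impI)
    fix chi i assume chi: "chi \<subseteq> {0..<P} \<and> card chi = K" and i: "i < M"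
    have finchi: "finite chi" using chi finite_subset by blast
    define c where "c p = (\<Prod>q\<in>chi-{p}. (\<beta> i - real q)/(real p - real q))" for p
    show "lin_comb_of_rows N F chi (a i)"
      unfolding lin_comb_of_rows_def
    proof (intro exI allI impI)
      fix j assume j: "j < N"
      define t where "t = j div n"
      have t: "t < P" using j Nn t_def n0 by (simp add: div_less_iff_less_mult mult.commute)
      have "(\<Sum>p\<in>chi. c p * F p j) = (\<Sum>m<M. a m j * (\<Sum>p\<in>chi. poly (R t m) (real p) * c p))"
        unfolding F_def t_def by (simp add: sum_distrib_left sum_distrib_right mult_ac sum.swap[of _ chi])
      also have "\<dots> = (\<Sum>m<M. a m j * poly (R t m) (\<beta> i))"
      proof (rule sum.cong[OF refl])
        fix m assume "m \<in> {..<M}"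
        hence "poly (R t m) (\<beta> i) = (\<Sum>p\<in>chi. poly (R t m) (real p) * c p)"
          unfolding c_def using lagrange_nat[OF finchi] degR[OF t] chi by simp
        thus "a m j * (\<Sum>p\<in>chi. poly (R t m) (real p) * c p) = a m j * poly (R t m) (\<beta> i)" by simp
      qed
      also have "\<dots> = (\<Sum>m<M. if m = i then a m j else 0)"
        by (rule sum.cong[OF refl]) (use Rb i in auto)
      also have "\<dots> = a i j" using i by simp
      finally show "a i j = (\<Sum>p\<in>chi. c p * F p j)" by simp
    qed
  next
    fix p assume p: "p < P"
    have sub: "{j. j < N \<and> F p j \<noteq> 0} \<subseteq> (\<lambda>(t, r). t * n + r) ` ({t. t < P \<and> g p t < d} \<times> {0..<n})"
    proof
      fix j assume "j \<in> {j. j < N \<and> F p j \<noteq> 0}"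
      hence j: "j < N" "F p j \<noteq> 0" by auto
      have t: "j div n < P" using j Nn n0 by (simp add: div_less_iff_less_mult mult.commute)
      have "g p (j div n) < d"
      proof (rule ccontr)
        assume "\<not> g p (j div n) < d"
        hence "p \<in> Z (j div n)" using p unfolding Z_def by auto
        hence "F p j = 0" unfolding F_def using R0 by simp
        thus False using j by simp
      qed
      moreover have "j = (j div n) * n + j mod n" by simp
      ultimately show "j \<in> (\<lambda>(t, r). t * n + r) ` ({t. t < P \<and> g p t < d} \<times> {0..<n})"
        using t n0 by (intro image_eqI[of _ _ "(j div n, j mod n)"]) auto
    qed
    have ct: "card {t. t < P \<and> g p t < d} \<le> d"
    proof -
      have "card {t. t < P \<and> g p t < d} = card ((\<lambda>t. g p t) ` {t. t < P \<and> g p t < d})"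
        by (rule card_image[symmetric], rule inj_on_subset[OF ginj2[OF p]]) auto
      also have "\<dots> \<le> card {0..<d}" by (rule card_mono) auto
      finally show ?thesis by simp
    qed
    have "sparsity N (F p) \<le> card ((\<lambda>(t, r). t * n + r) ` ({t. t < P \<and> g p t < d} \<times> {0..<n}))"
      unfolding sparsity_def by (rule card_mono[OF _ sub]) auto
    also have "\<dots> \<le> card ({t. t < P \<and> g p t < d} \<times> {0..<n})" by (rule card_image_le) auto
    also have "\<dots> \<le> d * n" using ct by (simp add: card_cartesian_product)
    finally have "real (sparsity N (F p)) \<le> real d * real n" by (metis of_nat_le_iff of_nat_mult)
    also have "real n = real N / real P" using Nn P0 by simp
    finally show "real (sparsity N (F p)) \<le> real N / real P * real (P - K + M)"
      unfolding d_def by (simp add: mult.commute)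
  qed
qed

end
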